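(* Consider, for a fixed time slot $t$ and a fixed degradation action, the convex bandwidth allocation problem $$\min_{\{b_{t,n}\},\{\tau^{\rm o}_{t,n}\}} \sum_{n=1}^N w_n \tau^{\rm o}_{t,n}\quad \text{s.t.}\quad \frac{d_{t,n}}{\tau^{\rm o}_{t,n}} \le b_{t,n} W \log_2\!\left(1+\frac{p_n h_{t,n}}{b_{t,n} W \delta^2}\right)\ \forall n,\quad \sum_{n=1}^N b_{t,n}\le 1,\quad b_{t,n}\ge 0,\ \tau^{\rm o}_{t,n}\ge 0\ \forall n.$$ Let $\phi_n\ge 0$ be the Lagrange multipliers of the per-device rate constraints and $\eta\ge 0$ the multiplier of the total bandwidth constraint, and let $\{\eta^\ast,\phi_n^\ast\}$ be the optimal dual variables (maximizers of the Lagrange dual function). Then the optimal solution $\{b_{t,n}^\ast, \tau^{\rm o\ast}_{t,n}\}$ of this problem has the closed-form structure $$\tau^{\rm o\ast}_{t,n} = \sqrt{\frac{\phi_n^\ast d_{t,n}}{w_n}},\qquad b_{t,n}^\ast = \frac{-p_n h_{t,n}}{W\delta^2\left[1+\left(\mathcal{W}\!\left(-\frac{1}{\exp\left(\frac{\eta^\ast \ln 2}{\phi_n^\ast W}+1\right)}\right)\right)^{-1}\right]},$$ where $\mathcal{W}(\cdot)$ is the Lambert-$\mathcal{W}$ function and $\exp(\cdot)$ is the exponential function.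
   Context: Edge inference system with $N$ edge devices offloading images to an edge server over FDMA with total bandwidth $W$; $b_{t,n}\ge 0$ is the fraction of bandwidth allocated to device $n$ in slot $t$, $p_n$ its fixed transmit power, $h_{t,n}$ its channel gain, $\delta^2$ the noise power spectral density, $d_{t,n}$ the offloaded data size in bits (determined by the fixed degradation action), $\tau^{\rm o}_{t,n}$ the offloading time, and $w_n\ge 0$ the latency weighting factor. *)

theory Defs
  imports "HOL-Analysis.Analysis"
begin

text \<open>Principal branch of the Lambert W function: for x \<ge> -1/e, the unique
  w \<ge> -1 with w * exp w = x.\<close>
definition lambertW :: "real \<Rightarrow> real" where
  "lambertW x = (THE w. w \<ge> -1 \<and> w * exp w = x)"

definition rate :: "real \<Rightarrow> real \<Rightarrow> real \<Rightarrow> real \<Rightarrow> real \<Rightarrow> real" where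
  "rate W p h delta2 b = b * W * log 2 (1 + p * h / (b * W * delta2))"

text \<open>Feasible set of the bandwidth allocation problem (devices indexed by n < N).
  The offloading time must be positive, since d/tau appears in the constraint.\<close>
definition feasible ::
  "nat \<Rightarrow> real \<Rightarrow> (nat \<Rightarrow> real) \<Rightarrow> (nat \<Rightarrow> real) \<Rightarrow> real \<Rightarrow> (nat \<Rightarrow> real)
   \<Rightarrow> (nat \<Rightarrow> real) \<Rightarrow> (nat \<Rightarrow> real) \<Rightarrow> bool" where
  "feasible N W p h delta2 d b tau \<longleftrightarrow>
     (\<forall>n<N. d n / tau n \<le> rate W (p n) (h n) delta2 (b n)) \<and>
     (\<Sum>n<N. b n) \<le> 1 \<and>
     (\<forall>n<N. b n \<ge> 0 \<and> tau n > 0)"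

definition objective :: "nat \<Rightarrow> (nat \<Rightarrow> real) \<Rightarrow> (nat \<Rightarrow> real) \<Rightarrow> real" where
  "objective N w tau = (\<Sum>n<N. w n * tau n)"

definition lagrangian ::
  "nat \<Rightarrow> real \<Rightarrow> (nat \<Rightarrow> real) \<Rightarrow> (nat \<Rightarrow> real) \<Rightarrow> real \<Rightarrow> (nat \<Rightarrow> real)
   \<Rightarrow> (nat \<Rightarrow> real) \<Rightarrow> (nat \<Rightarrow> real) \<Rightarrow> (nat \<Rightarrow> real) \<Rightarrow> real \<Rightarrow> (nat \<Rightarrow> real) \<Rightarrow> real" where
  "lagrangian N W p h delta2 d w b tau eta phi =
     (\<Sum>n<N. w n * tau n)
     + (\<Sum>n<N. phi n * (d n / tau n - rate W (p n) (h n) delta2 (b n)))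
     + eta * ((\<Sum>n<N. b n) - 1)"

text \<open>Lagrange dual function (extended-real valued, may be -\<infinity>), infimum over the
  domain b \<ge> 0, tau > 0.\<close>
definition dual_fun ::
  "nat \<Rightarrow> real \<Rightarrow> (nat \<Rightarrow> real) \<Rightarrow> (nat \<Rightarrow> real) \<Rightarrow> real \<Rightarrow> (nat \<Rightarrow> real)
   \<Rightarrow> (nat \<Rightarrow> real) \<Rightarrow> real \<Rightarrow> (nat \<Rightarrow> real) \<Rightarrow> ereal" where
  "dual_fun N W p h delta2 d w eta phi =
     (INF bt \<in> {(b, tau). \<forall>n<N. b n \<ge> 0 \<and> tau n > 0}.
        ereal (lagrangian N W p h delta2 d w (fst bt) (snd bt) eta phi))"

end

theory Submission
  imports Defs
begin


definition U :: "real \<Rightarrow> real \<Rightarrow> real" where "U c b = b * ln (1 + c / b)"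
definition U' :: "real \<Rightarrow> real \<Rightarrow> real" where "U' c b = ln (1 + c / b) - c / (b + c)"

lemma ln_strict: assumes "0 < (x::real)" "x \<noteq> 1" shows "ln x < x - 1"
proof -
  have s: "sqrt x > 0" "sqrt x \<noteq> 1" using assms by auto
  have "ln x = 2 * ln (sqrt x)" using assms by (simp add: ln_sqrt)
  also have "\<dots> \<le> 2 * (sqrt x - 1)" using ln_le_minus_one[OF s(1)] by simp
  also have "\<dots> < x - 1"
  proof -
    have "(sqrt x - 1)^2 > 0" using s by simp
    then show ?thesis using assms by (simp add: power2_eq_square algebra_simps)
  qed
  finally show ?thesis .
qed

lemma rate_eq: "rate W p h delta2 b = W / ln 2 * U (p * h / (W * delta2)) b"
  unfolding rate_def U_def log_def by (simp add: field_simps)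

lemma U_deriv: assumes "c > 0" "b > 0" shows "(U c has_real_derivative U' c b) (at b)"
proof -
  have d1: "((\<lambda>x. 1 + c/x) has_real_derivative (-c/b^2)) (at b)"
    using assms by (auto intro!: derivative_eq_intros simp: power2_eq_square)
  have pos: "1 + c / b > 0" using assms by (simp add: add_pos_pos)
  have d2: "((\<lambda>x. ln (1 + c/x)) has_real_derivative (1/(1+c/b)) * (-c/b^2)) (at b)"
    by (rule DERIV_chain2[OF DERIV_ln_divide[OF pos] d1])
  have d3: "((\<lambda>x. x * ln (1 + c/x)) has_real_derivative
      1 * ln (1 + c/b) + (1/(1+c/b)) * (-c/b^2) * b) (at b)"
    by (rule DERIV_mult[OF DERIV_ident d2])
  have bc: "b + c \<noteq> 0" "b \<noteq> 0" using assms by auto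
  have e: "1 * ln (1 + c/b) + (1/(1+c/b)) * (-c/b^2) * b = U' c b"
  proof -
    have "1/(1+c/b) = b/(b+c)" using bc by (simp add: field_simps)
    moreover have "b/(b+c) * (-c/b^2) * b = -c/(b+c)" using bc
      by (simp add: power2_eq_square divide_simps)
    ultimately show ?thesis unfolding U'_def by simp
  qed
  show ?thesis using d3 unfolding e U_def[abs_def] .
qed

lemma U_tangent: assumes "c > 0" "b0 > 0" "b \<ge> 0" shows "U c b \<le> U c b0 + U' c b0 * (b - b0)"
proof (cases "b = 0")
  case True
  have "U c b0 + U' c b0 * (0 - b0) = b0 * c / (b0 + c)" using assms by (simp add: U_def U'_def algebra_simps)
  moreover have "b0 * c / (b0 + c) \<ge> 0" using assms by simp
  ultimately show ?thesis using True by (simp add: U_def)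
next
  case False
  hence bp: "b > 0" using assms by simp
  define X where "X = (1 + c/b) / (1 + c/b0)"
  have X0: "X > 0" unfolding X_def using assms bp by (intro divide_pos_pos add_pos_pos) auto
  have "1 + c/b > 0" "1 + c/b0 > 0" using assms bp by (auto intro: add_pos_pos)
  then have "ln X = ln (1 + c/b) - ln (1 + c/b0)" unfolding X_def
    by (simp add: ln_divide_pos)
  moreover have pp: "b0 + c \<noteq> 0" using assms bp by simp
  moreover have "X - 1 = c * (b0 - b) / (b * (b0 + c))" unfolding X_def using assms bp pp
    by (simp add: divide_simps) (simp add: algebra_simps)
  ultimately have "ln (1 + c/b) - ln (1 + c/b0) \<le> c * (b0 - b) / (b * (b0 + c))"
    using ln_le_minus_one[OF X0] by simp
  hence "b * (ln (1 + c/b) - ln (1 + c/b0)) \<le> b * (c * (b0 - b) / (b * (b0 + c)))"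
    by (rule mult_left_mono) (use bp in auto)
  also have "\<dots> = c * (b0 - b) / (b0 + c)" using bp by simp
  finally have *: "b * ln (1 + c/b) \<le> b * ln (1 + c/b0) + c * (b0 - b) / (b0 + c)" by (simp add: algebra_simps)
  have "U c b0 + U' c b0 * (b - b0) = b * ln (1 + c/b0) + c * (b0 - b) / (b0 + c)"
    using assms by (simp add: U_def U'_def field_simps)
  with * show ?thesis by (simp add: U_def)
qed

lemma U'_pos: assumes "c > 0" "b > 0" shows "U' c b > 0"
proof -
  define y where "y = 1 + c / b"
  have y1: "y > 1" using assms by (simp add: y_def)
  have "ln (1/y) < 1/y - 1" using y1 by (intro ln_strict) auto
  hence "ln y > 1 - 1/y" using y1 by (simp add: ln_div)
  moreover have "c / (b + c) = 1 - 1/y" using assms by (simp add: y_def field_simps)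
  ultimately show ?thesis by (simp add: U'_def y_def)
qed

lemma U_pos: assumes "c > 0" "b > 0" shows "U c b > 0"
  using assms unfolding U_def by (intro mult_pos_pos ln_gt_zero) auto

lemma U_mono: assumes "c > 0" "0 < b0" "b0 < b" shows "U c b0 < U c b"
proof -
  have "U c b0 \<le> U c b + U' c b * (b0 - b)" using U_tangent[of c b b0] assms by simp
  moreover have "U' c b * (b0 - b) < 0" using U'_pos[of c b] assms by (simp add: mult_pos_neg)
  ultimately show ?thesis by simp
qed

lemma wexp_mono: assumes "-1 \<le> (a::real)" "a < b" shows "a * exp a < b * exp b"
proof -
  have "(\<lambda>w. w * exp w) a < (\<lambda>w. w * exp w) b"
  proof (rule DERIV_pos_imp_increasing_open[OF assms(2)])
  fix x assume "a < x" "x < b"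
  show "\<exists>y. ((\<lambda>w. w * exp w) has_real_derivative y) (at x) \<and> y > 0"
    apply (rule exI[of _ "(1 + x) * exp x"])
    apply (intro conjI)
     apply (rule derivative_eq_intros refl | simp)+
     apply (simp add: algebra_simps)
    using \<open>a < x\<close> assms by simp
next
  show "continuous_on {a..b} (\<lambda>w. w * exp w)" by (intro continuous_intros)
  qed
  then show ?thesis by simp
qed

lemma lambertW_eq: assumes "y > 1" shows "lambertW (- (1/y) * exp (- (1/y))) = - (1/y)"
  unfolding lambertW_def
proof (rule the_equality)
  show "- (1/y) \<ge> -1 \<and> - (1/y) * exp (- (1/y)) = - (1/y) * exp (- (1/y))" using assms by simp
next
  fix w assume w: "w \<ge> -1 \<and> w * exp w = - (1/y) * exp (- (1/y))"
  have y: "- (1/y) \<ge> -1" using assms by simp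
  show "w = - (1/y)"
  proof (rule ccontr)
    assume "w \<noteq> - (1/y)"
    then consider "w < - (1/y)" | "w > - (1/y)" by linarith
    then show False using wexp_mono[of w "-(1/y)"] wexp_mono[of "-(1/y)" w] w y by cases auto
  qed
qed


lemma U_deriv_chain:
  assumes "c > 0" "g x > 0" "(g has_real_derivative g') (at x)"
  shows "((\<lambda>x. U c (g x)) has_real_derivative U' c (g x) * g') (at x)"
  using DERIV_chain2[OF U_deriv[OF assms(1,2)] assms(3)] .

lemma sum_upd:
  fixes F :: "'a \<Rightarrow> 'b \<Rightarrow> real"
  assumes "finite A" "n \<in> A"
  shows "(\<Sum>k\<in>A. F k ((g(n:=x)) k)) = (\<Sum>k\<in>A. F k (g k)) - F n (g n) + F n x"
proof -
  have "(\<Sum>k\<in>A. F k ((g(n:=x)) k)) = F n x + (\<Sum>k\<in>A-{n}. F k ((g(n:=x)) k))"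
    using sum.remove[OF assms, of "\<lambda>k. F k ((g(n:=x)) k)"] by simp
  also have "(\<Sum>k\<in>A-{n}. F k ((g(n:=x)) k)) = (\<Sum>k\<in>A-{n}. F k (g k))"
    by (rule sum.cong) auto
  also have "(\<Sum>k\<in>A-{n}. F k (g k)) = (\<Sum>k\<in>A. F k (g k)) - F n (g n)"
    using sum.remove[OF assms, of "\<lambda>k. F k (g k)"] by simp
  finally show ?thesis by simp
qed

lemma lag_eq: "lagrangian N W p h delta2 d w bb tt eta phi =
   (\<Sum>k<N. w k * tt k + phi k * (d k / tt k - rate W (p k) (h k) delta2 (bb k)) + eta * bb k) - eta"
  unfolding lagrangian_def
  by (simp only: sum.distrib sum_distrib_left) (simp add: algebra_simps sum_distrib_left)



theorem proposition1:
  fixes N :: nat and W delta2 :: real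
    and p h d w :: "nat \<Rightarrow> real"
    and bopt tauopt :: "nat \<Rightarrow> real"
    and etaopt :: real and phiopt :: "nat \<Rightarrow> real"
  assumes W_pos: "W > 0" and delta2_pos: "delta2 > 0"
    and params_pos: "\<forall>n<N. p n > 0 \<and> h n > 0 \<and> d n > 0 \<and> w n > 0"
    and primal_opt: "feasible N W p h delta2 d bopt tauopt"
        "\<forall>b tau. feasible N W p h delta2 d b tau \<longrightarrow> objective N w tauopt \<le> objective N w tau"
    and dual_opt: "etaopt \<ge> 0" "\<forall>n<N. phiopt n \<ge> 0"
        "\<forall>eta phi. eta \<ge> 0 \<and> (\<forall>n<N. phi n \<ge> 0) \<longrightarrow>
            dual_fun N W p h delta2 d w eta phi \<le> dual_fun N W p h delta2 d w etaopt phiopt"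
  shows "\<forall>n<N.
     tauopt n = sqrt (phiopt n * d n / w n) \<and>
     bopt n = - p n * h n /
       (W * delta2 * (1 + inverse (lambertW (- 1 / exp (etaopt * ln 2 / (phiopt n * W) + 1)))))"
proof (intro allI impI)
  fix n assume nN: "n < N"
  define K where "K = W / ln 2"
  define c where "c k = p k * h k / (W * delta2)" for k
  define R where "R k x = rate W (p k) (h k) delta2 x" for k x
  define b where "b = bopt"
  define \<tau> where "\<tau> = tauopt"
  define P where "P = objective N w \<tau>"
  have Kpos: "K > 0" using W_pos by (simp add: K_def)
  have cpos: "c k > 0" if "k < N" for k using params_pos that W_pos delta2_pos by (simp add: c_def)
  have R_eq: "R k x = K * U (c k) x" for k x unfolding R_def K_def c_def rate_eq ..
  have F1: "\<forall>k<N. d k / \<tau> k \<le> R k (b k)" and F2: "(\<Sum>k<N. b k) \<le> 1"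
    and F3: "\<forall>k<N. b k \<ge> 0 \<and> \<tau> k > 0"
    using primal_opt(1) unfolding feasible_def R_def b_def \<tau>_def by auto
  have opt: "P \<le> objective N w tt" if "feasible N W p h delta2 d bb tt" for bb tt
    using primal_opt(2) that unfolding P_def \<tau>_def by blast
  have feasI: "feasible N W p h delta2 d bb tt"
    if "\<forall>k<N. d k / tt k \<le> R k (bb k)" "(\<Sum>k<N. bb k) \<le> 1" "\<forall>k<N. bb k \<ge> 0 \<and> tt k > 0" for bb tt
    using that unfolding feasible_def R_def by auto
  have dpos: "d k > 0" "w k > 0" if "k < N" for k using params_pos that by auto
  have bpos: "b k > 0" if k: "k < N" for k
  proof (rule ccontr)
    assume "\<not> b k > 0"
    hence "b k = 0" using F3 k by force
    hence "R k (b k) = 0" by (simp add: R_def rate_def)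
    moreover have "d k / \<tau> k > 0" using dpos[OF k] F3 k by simp
    ultimately show False using F1 k by force
  qed
  have Rpos: "R k x > 0" if "k < N" "x > 0" for k x
    using R_eq U_pos[OF cpos[OF that(1)] that(2)] Kpos by simp
  have tau_eq: "\<tau> k = d k / R k (b k)" if k: "k < N" for k
  proof (rule ccontr)
    assume ne: "\<tau> k \<noteq> d k / R k (b k)"
    have Rk: "R k (b k) > 0" using Rpos[OF k bpos[OF k]] .
    have "d k / \<tau> k \<le> R k (b k)" using F1 k by auto
    hence "d k \<le> R k (b k) * \<tau> k" using F3 k by (simp add: divide_le_eq)
    hence "d k / R k (b k) \<le> \<tau> k" using Rk by (simp add: divide_le_eq mult.commute)
    with ne have lt: "d k / R k (b k) < \<tau> k" by simp
    define tt where "tt = \<tau>(k := d k / R k (b k))"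
    have "feasible N W p h delta2 d b tt"
    proof (rule feasI)
      show "\<forall>m<N. d m / tt m \<le> R m (b m)"
        using F1 Rk dpos[OF k] by (auto simp: tt_def)
      show "(\<Sum>k<N. b k) \<le> 1" by (rule F2)
      show "\<forall>m<N. b m \<ge> 0 \<and> tt m > 0"
        using F3 Rk dpos[OF k] by (auto simp: tt_def)
    qed
    hence "P \<le> objective N w tt" by (rule opt)
    also have "objective N w tt = P - w k * \<tau> k + w k * (d k / R k (b k))"
      unfolding objective_def P_def tt_def
      using sum_upd[of "{..<N}" k "\<lambda>m t. w m * t" \<tau> "d k / R k (b k)"] k by simp
    moreover have "w k * (d k / R k (b k)) < w k * \<tau> k"
      using mult_strict_left_mono[OF lt dpos(2)[OF k]] .
    ultimately show False by linarith
  qed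
  have tauR: "d k / \<tau> k = R k (b k)" if k: "k < N" for k
    using tau_eq[OF k] dpos[OF k] Rpos[OF k bpos[OF k]] by simp
  have Rmono: "R k x < R k y" if "k < N" "0 < x" "x < y" for k x y
    using R_eq U_mono[OF cpos[OF that(1)] that(2,3)] Kpos by simp
  have sum_eq: "(\<Sum>k<N. b k) = 1"
  proof (rule ccontr)
    assume "(\<Sum>k<N. b k) \<noteq> 1"
    with F2 have slt: "(\<Sum>k<N. b k) < 1" by simp
    define x where "x = b n + (1 - (\<Sum>k<N. b k))"
    have bx: "b n < x" using slt by (simp add: x_def)
    have Rlt: "R n (b n) < R n x" using Rmono[OF nN bpos[OF nN] bx] .
    have Rn: "R n (b n) > 0" using Rpos[OF nN bpos[OF nN]] .
    define bb where "bb = b(n := x)"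
    define tt where "tt = \<tau>(n := d n / R n x)"
    have "feasible N W p h delta2 d bb tt"
    proof (rule feasI)
      show "\<forall>m<N. d m / tt m \<le> R m (bb m)"
        using F1 Rn Rlt dpos[OF nN] by (auto simp: tt_def bb_def)
      have "(\<Sum>k<N. bb k) = (\<Sum>k<N. b k) - b n + x"
        unfolding bb_def using sum_upd[of "{..<N}" n "\<lambda>m t. t" b x] nN by simp
      then show "(\<Sum>k<N. bb k) \<le> 1" by (simp add: x_def)
      show "\<forall>m<N. bb m \<ge> 0 \<and> tt m > 0"
        using F3 Rn Rlt bx bpos[OF nN] dpos[OF nN] by (auto simp: tt_def bb_def)
    qed
    hence "P \<le> objective N w tt" by (rule opt)
    also have "objective N w tt = P - w n * \<tau> n + w n * (d n / R n x)"
      unfolding objective_def P_def tt_def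
      using sum_upd[of "{..<N}" n "\<lambda>m t. w m * t" \<tau> "d n / R n x"] nN by simp
    finally have "w n * \<tau> n \<le> w n * (d n / R n x)" by simp
    moreover have "d n / R n x < \<tau> n"
      unfolding tau_eq[OF nN] using Rlt Rn dpos[OF nN] by (simp add: divide_strict_left_mono)
    ultimately show False using dpos[OF nN] mult_le_cancel_left_pos[of "w n" "\<tau> n" "d n / R n x"] by linarith
  qed
  define \<phi> where "\<phi> k = w k * \<tau> k ^ 2 / d k" for k
  define Rd where "Rd k = K * U' (c k) (b k)" for k
  have phi_eq: "\<phi> k = w k * d k / R k (b k) ^ 2" if k: "k < N" for k
    unfolding \<phi>_def tau_eq[OF k] using dpos[OF k] by (simp add: power2_eq_square)
  have lagr: "\<phi> i * Rd i = \<phi> j * Rd j" if i: "i < N" and j: "j < N" for i j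
  proof (cases "i = j")
    case True then show ?thesis by simp
  next
    case False
    define G where "G e = w i * (d i / R i (b i + e)) + w j * (d j / R j (b j - e))" for e
    define \<delta> where "\<delta> = min (b i) (b j)"
    have \<delta>pos: "\<delta> > 0" using bpos[OF i] bpos[OF j] by (simp add: \<delta>_def)
    have r1: "((\<lambda>e. R i (b i + e)) has_real_derivative Rd i) (at 0)"
    proof -
      have g: "((\<lambda>e. b i + e) has_real_derivative 1) (at 0)"
        by (auto intro!: derivative_eq_intros)
      have "((\<lambda>e. K * U (c i) (b i + e)) has_real_derivative K * (U' (c i) (b i + 0) * 1)) (at 0)"
        by (rule DERIV_cmult, rule U_deriv_chain[OF cpos[OF i] _ g]) (use bpos[OF i] in simp)
      then show ?thesis unfolding R_eq Rd_def by simp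
    qed
    have r2: "((\<lambda>e. R j (b j - e)) has_real_derivative - Rd j) (at 0)"
    proof -
      have g: "((\<lambda>e. b j - e) has_real_derivative -1) (at 0)"
        by (auto intro!: derivative_eq_intros)
      have "((\<lambda>e. K * U (c j) (b j - e)) has_real_derivative K * (U' (c j) (b j - 0) * -1)) (at 0)"
        by (rule DERIV_cmult, rule U_deriv_chain[OF cpos[OF j] _ g]) (use bpos[OF j] in simp)
      then show ?thesis unfolding R_eq Rd_def by simp
    qed
    have Ri: "R i (b i) \<noteq> 0" "R j (b j) \<noteq> 0" using Rpos i j bpos by (auto simp: less_imp_neq[symmetric])
    have dG: "(G has_real_derivative (- (\<phi> i * Rd i) + \<phi> j * Rd j)) (at 0)"
    proof -
      have q1: "((\<lambda>e. w i * (d i / R i (b i + e))) has_real_derivative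
         w i * ((0 * R i (b i + 0) - d i * Rd i) / (R i (b i + 0) * R i (b i + 0)))) (at 0)"
        by (intro DERIV_cmult DERIV_divide DERIV_const r1) (use Ri in simp)
      have q2: "((\<lambda>e. w j * (d j / R j (b j - e))) has_real_derivative
         w j * ((0 * R j (b j - 0) - d j * (- Rd j)) / (R j (b j - 0) * R j (b j - 0)))) (at 0)"
        by (intro DERIV_cmult DERIV_divide DERIV_const r2) (use Ri in simp)
      have eq: "w i * ((0 * R i (b i + 0) - d i * Rd i) / (R i (b i + 0) * R i (b i + 0))) +
         w j * ((0 * R j (b j - 0) - d j * (- Rd j)) / (R j (b j - 0) * R j (b j - 0)))
         = - (\<phi> i * Rd i) + \<phi> j * Rd j"
        unfolding phi_eq[OF i] phi_eq[OF j] by (simp add: power2_eq_square)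
      show ?thesis using DERIV_add[OF q1 q2] unfolding eq G_def[abs_def] .
    qed
    have loc: "\<forall>y. \<bar>0 - y\<bar> < \<delta> \<longrightarrow> G 0 \<le> G y"
    proof (intro allI impI)
      fix y assume y: "\<bar>0 - y\<bar> < \<delta>"
      define bb where "bb = (b(i := b i + y))(j := b j - y)"
      define tt where "tt k = d k / R k (bb k)" for k
      have bbpos: "bb k > 0" if "k < N" for k
        using y bpos[OF that] unfolding bb_def \<delta>_def by auto
      define F where "F k x = w k * (d k / R k x)" for k x
      have sb: "(\<Sum>k<N. bb k) = (\<Sum>k<N. b k)"
        unfolding bb_def
        using sum_upd[of "{..<N}" j "\<lambda>m t. t" "b(i := b i + y)" "b j - y"]
          sum_upd[of "{..<N}" i "\<lambda>m t. t" b "b i + y"] i j False by simp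
      have so: "(\<Sum>k<N. F k (bb k)) = (\<Sum>k<N. F k (b k)) - F i (b i) + F i (b i + y) - F j (b j) + F j (b j - y)"
        unfolding bb_def
        using sum_upd[of "{..<N}" j F "b(i := b i + y)" "b j - y"]
          sum_upd[of "{..<N}" i F b "b i + y"] i j False by simp
      have "feasible N W p h delta2 d bb tt"
      proof (rule feasI)
        show "\<forall>m<N. d m / tt m \<le> R m (bb m)"
        proof (intro allI impI)
          fix m assume m: "m < N"
          show "d m / tt m \<le> R m (bb m)" using Rpos[OF m bbpos[OF m]] dpos[OF m] by (simp add: tt_def)
        qed
        show "(\<Sum>k<N. bb k) \<le> 1" using sb F2 by simp
        show "\<forall>m<N. bb m \<ge> 0 \<and> tt m > 0"
          using Rpos bbpos dpos by (simp add: tt_def less_imp_le)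
      qed
      hence "P \<le> objective N w tt" by (rule opt)
      moreover have "objective N w tt = (\<Sum>k<N. F k (bb k))"
        unfolding objective_def tt_def F_def by simp
      moreover have "P = (\<Sum>k<N. F k (b k))"
        unfolding P_def objective_def F_def using tau_eq by simp
      ultimately show "G 0 \<le> G y" using so unfolding G_def F_def by simp
    qed
    have "- (\<phi> i * Rd i) + \<phi> j * Rd j = 0" by (rule DERIV_local_min[OF dG \<delta>pos loc])
    then show ?thesis by simp
  qed
  define \<eta> where "\<eta> = \<phi> n * Rd n"
  have heta: "\<phi> k * Rd k = \<eta>" if "k < N" for k unfolding \<eta>_def using lagr[OF that nN] .
  have phinn: "\<phi> k \<ge> 0" if "k < N" for k using dpos[OF that] by (simp add: \<phi>_def)
  have Rdpos: "Rd k > 0" if "k < N" for k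
    using Kpos U'_pos[OF cpos[OF that] bpos[OF that]] by (simp add: Rd_def)
  have etann: "\<eta> \<ge> 0" using phinn[OF nN] Rdpos[OF nN] by (simp add: \<eta>_def)
  have lagR: "lagrangian N W p h delta2 d w bb tt eta phi =
     (\<Sum>k<N. w k * tt k + phi k * (d k / tt k - R k (bb k)) + eta * bb k) - eta" for bb tt eta phi
    by (simp add: lag_eq R_def)
  have Ptau: "P = (\<Sum>k<N. w k * \<tau> k)" by (simp add: P_def objective_def)
  have lower: "P \<le> lagrangian N W p h delta2 d w bb tt \<eta> \<phi>"
    if dom: "\<forall>k<N. bb k \<ge> 0 \<and> tt k > 0" for bb tt
  proof -
    have trm: "w k * \<tau> k + \<eta> * b k \<le> w k * tt k + \<phi> k * (d k / tt k - R k (bb k)) + \<eta> * bb k"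
      if k: "k < N" for k
    proof -
      have t: "tt k > 0" and x: "bb k \<ge> 0" using dom k by auto
      have i1: "\<phi> k * (d k / tt k) = w k * \<tau> k ^ 2 / tt k"
        using dpos[OF k] by (simp add: \<phi>_def)
      have "w k * (tt k - \<tau> k)^2 / tt k \<ge> 0" using t dpos[OF k] by simp
      moreover have "w k * (tt k - \<tau> k)^2 / tt k = w k * tt k + w k * \<tau> k ^ 2 / tt k - 2 * w k * \<tau> k"
        using t by (simp add: field_simps power2_eq_square)
      ultimately have A: "w k * tt k + \<phi> k * (d k / tt k) \<ge> 2 * w k * \<tau> k" using i1 by linarith
      have tan: "R k (bb k) \<le> R k (b k) + Rd k * (bb k - b k)"
      proof -
        have "K * U (c k) (bb k) \<le> K * (U (c k) (b k) + U' (c k) (b k) * (bb k - b k))"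
          using mult_left_mono[OF U_tangent[OF cpos[OF k] bpos[OF k] x]] Kpos by simp
        then show ?thesis unfolding R_eq Rd_def by (simp add: distrib_left)
      qed
      have "\<phi> k * R k (bb k) \<le> \<phi> k * (R k (b k) + Rd k * (bb k - b k))"
        using mult_left_mono[OF tan phinn[OF k]] .
      also have "\<dots> = \<phi> k * R k (b k) + (\<phi> k * Rd k) * (bb k - b k)"
        by (simp add: algebra_simps)
      also have "\<dots> = \<phi> k * R k (b k) + \<eta> * (bb k - b k)"
        unfolding heta[OF k] ..
      also have "\<phi> k * R k (b k) = w k * \<tau> k"
        unfolding tauR[OF k, symmetric] using dpos[OF k] F3 k by (simp add: \<phi>_def power2_eq_square)
      finally have B: "\<phi> k * R k (bb k) \<le> w k * \<tau> k + \<eta> * (bb k - b k)" .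
      show ?thesis using A B by (simp add: algebra_simps)
    qed
    have "(\<Sum>k<N. w k * \<tau> k + \<eta> * b k) \<le> (\<Sum>k<N. w k * tt k + \<phi> k * (d k / tt k - R k (bb k)) + \<eta> * bb k)"
      by (rule sum_mono) (use trm in auto)
    moreover have "(\<Sum>k<N. w k * \<tau> k + \<eta> * b k) = P + \<eta>"
      using sum_eq by (simp add: Ptau sum.distrib flip: sum_distrib_left)
    ultimately show ?thesis unfolding lagR by simp
  qed
  have dualP: "ereal P \<le> dual_fun N W p h delta2 d w \<eta> \<phi>"
    unfolding dual_fun_def by (rule INF_greatest) (use lower in \<open>auto simp: ereal_less_eq\<close>)
  have dualP': "ereal P \<le> dual_fun N W p h delta2 d w etaopt phiopt"
    using dualP dual_opt(3) etann phinn by (meson order_trans)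
  have lowopt: "P \<le> lagrangian N W p h delta2 d w bb tt etaopt phiopt"
    if dom: "\<forall>k<N. bb k \<ge> 0 \<and> tt k > 0" for bb tt
  proof -
    have "dual_fun N W p h delta2 d w etaopt phiopt \<le> ereal (lagrangian N W p h delta2 d w bb tt etaopt phiopt)"
      unfolding dual_fun_def by (rule INF_lower2[of "(bb, tt)"]) (use dom in auto)
    with dualP' have "ereal P \<le> ereal (lagrangian N W p h delta2 d w bb tt etaopt phiopt)"
      by (rule order_trans)
    then show ?thesis by simp
  qed
  have Lopt: "(\<Sum>k<N. w k * \<tau> k + phiopt k * (d k / \<tau> k - R k (b k)) + etaopt * b k) - etaopt = P"
  proof -
    have "(\<Sum>k<N. w k * \<tau> k + phiopt k * (d k / \<tau> k - R k (b k)) + etaopt * b k)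
        = (\<Sum>k<N. w k * \<tau> k + etaopt * b k)"
      by (rule sum.cong) (simp_all add: tauR)
    also have "\<dots> = P + etaopt" using sum_eq by (simp add: Ptau sum.distrib flip: sum_distrib_left)
    finally show ?thesis by simp
  qed
  have bdom: "\<forall>k<N. b k \<ge> 0 \<and> \<tau> k > 0" using F3 by auto
  define Qt where "Qt t = w n * t + phiopt n * (d n / t - R n (b n)) + etaopt * b n" for t
  have hG: "Qt (\<tau> n) \<le> Qt s" if s: "s > 0" for s
  proof -
    have "P \<le> lagrangian N W p h delta2 d w b (\<tau>(n := s)) etaopt phiopt"
      by (rule lowopt) (use bdom s in auto)
    also have "\<dots> = P - Qt (\<tau> n) + Qt s"
      unfolding lagR Qt_def
      using sum_upd[of "{..<N}" n "\<lambda>k t. w k * t + phiopt k * (d k / t - R k (b k)) + etaopt * b k" \<tau> s] nN Lopt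
      by simp
    finally show ?thesis by simp
  qed
  have tn: "\<tau> n > 0" using F3 nN by auto
  have Qs: "w n * \<tau> n + phiopt n * d n / \<tau> n \<le> w n * s + phiopt n * d n / s" if "s > 0" for s
    using hG[OF that] unfolding Qt_def by (simp add: algebra_simps)
  have phipos: "phiopt n > 0"
  proof (rule ccontr)
    assume "\<not> phiopt n > 0"
    hence "phiopt n = 0" using dual_opt(2) nN by force
    hence "w n * \<tau> n \<le> w n * (\<tau> n / 2)" using Qs[of "\<tau> n / 2"] tn by simp
    thus False using tn dpos[OF nN] by (simp add: mult_le_cancel_left_pos)
  qed
  define s0 where "s0 = sqrt (phiopt n * d n / w n)"
  have s0pos: "s0 > 0" using phipos dpos[OF nN] by (simp add: s0_def)
  have s0sq: "phiopt n * d n = w n * s0^2" using phipos dpos[OF nN] by (simp add: s0_def)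
  have tau_final: "\<tau> n = s0"
  proof -
    have "w n * \<tau> n + w n * s0^2 / \<tau> n \<le> w n * s0 + w n * s0^2 / s0"
      using Qs[OF s0pos] unfolding s0sq .
    also have "w n * s0 + w n * s0^2 / s0 = 2 * w n * s0" using s0pos by (simp add: power2_eq_square)
    finally have "w n * \<tau> n + w n * s0^2 / \<tau> n - 2 * w n * s0 \<le> 0" by simp
    moreover have "w n * \<tau> n + w n * s0^2 / \<tau> n - 2 * w n * s0 = w n * (\<tau> n - s0)^2 / \<tau> n"
      using tn by (simp add: field_simps power2_eq_square)
    ultimately have "w n * (\<tau> n - s0)^2 / \<tau> n \<le> 0" by simp
    hence "(\<tau> n - s0)^2 \<le> 0" using tn dpos[OF nN]
      by (simp add: divide_le_0_iff mult_le_0_iff)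
    thus ?thesis by simp
  qed
  define f where "f x = etaopt * x - phiopt n * (K * U (c n) x)" for x
  have hH: "f (b n) \<le> f x" if x: "x \<ge> 0" for x
  proof -
    define Qb where "Qb y = w n * \<tau> n + phiopt n * (d n / \<tau> n - R n y) + etaopt * y" for y
    have "P \<le> lagrangian N W p h delta2 d w (b(n := x)) \<tau> etaopt phiopt"
      by (rule lowopt) (use bdom x in auto)
    also have "\<dots> = P - Qb (b n) + Qb x"
      unfolding lagR Qb_def
      using sum_upd[of "{..<N}" n "\<lambda>k y. w k * \<tau> k + phiopt k * (d k / \<tau> k - R k y) + etaopt * y" b x] nN Lopt
      by simp
    finally have "Qb (b n) \<le> Qb x" by simp
    thus ?thesis unfolding Qb_def f_def R_eq by (simp add: algebra_simps)
  qed
  have df: "(f has_real_derivative etaopt * 1 - phiopt n * (K * U' (c n) (b n))) (at (b n))"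
    unfolding f_def[abs_def]
    by (intro DERIV_diff DERIV_cmult DERIV_ident U_deriv cpos nN bpos)
  have "etaopt * 1 - phiopt n * (K * U' (c n) (b n)) = 0"
  proof (rule DERIV_local_min[OF df bpos[OF nN]], intro allI impI)
    fix y assume "\<bar>b n - y\<bar> < b n"
    hence "y \<ge> 0" by simp
    thus "f (b n) \<le> f y" by (rule hH)
  qed
  hence etaeq: "etaopt = phiopt n * (K * U' (c n) (b n))" by simp
  define a where "a = etaopt * ln 2 / (phiopt n * W)"
  have ln2: "ln (2::real) > 0" by simp
  have Ua: "U' (c n) (b n) = a"
    unfolding a_def etaeq K_def using phipos W_pos ln2 by (simp add: field_simps)
  define y where "y = 1 + c n / b n"
  have bn: "b n > 0" using bpos[OF nN] .
  have cn: "c n > 0" using cpos[OF nN] .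
  have y1: "y > 1" using bn cn by (simp add: y_def)
  have cb: "c n / (b n + c n) = 1 - 1/y" using bn cn by (simp add: y_def field_simps)
  have lny: "ln y + 1/y = a + 1" using Ua unfolding U'_def cb y_def[symmetric] by simp
  have ex: "- 1 / exp (a + 1) = - (1/y) * exp (- (1/y))"
  proof -
    have "exp (a + 1) = y * exp (1/y)" unfolding lny[symmetric] using y1 by (simp add: exp_add)
    then show ?thesis by (simp add: exp_minus field_simps)
  qed
  have LW: "lambertW (- 1 / exp (a + 1)) = - (1/y)" unfolding ex by (rule lambertW_eq[OF y1])
  have "1 + inverse (lambertW (- 1 / exp (a + 1))) = - (c n / b n)"
    unfolding LW using y1 by (simp add: y_def)
  hence den: "W * delta2 * (1 + inverse (lambertW (- 1 / exp (a + 1)))) = - (p n * h n) / b n"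
    using W_pos delta2_pos by (simp add: c_def)
  have ph: "p n * h n \<noteq> 0" using params_pos nN by force
  have bfin: "b n = - p n * h n / (W * delta2 * (1 + inverse (lambertW (- 1 / exp (a + 1)))))"
    unfolding den using bn ph by simp
  show "tauopt n = sqrt (phiopt n * d n / w n) \<and>
     bopt n = - p n * h n /
       (W * delta2 * (1 + inverse (lambertW (- 1 / exp (etaopt * ln 2 / (phiopt n * W) + 1)))))"
    using tau_final bfin unfolding s0_def a_def b_def \<tau>_def by simp
qed

end
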